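(* Let $G$ be a graph of order $n\ge 9$. If $\tau(G)\le\frac{n}{2}$ and ${\rm diam}(G)=2$, then $\beta_p(G)\le n-3$.
   Context: All graphs are finite, simple, undirected and connected. Two vertices $u,v$ are twins if $N(u)\setminus\{v\}=N(v)\setminus\{u\}$; the twin number $\tau(G)$ is the maximum cardinality of an equivalence class of the twin relation. For a partition $\Pi=\{S_1,\dots,S_k\}$ of $V(G)$, $r(u|\Pi)=(d(u,S_1),\dots,d(u,S_k))$ with $d(u,S)=\min_{w\in S}d(u,w)$; $\Pi$ is locating if $r(u|\Pi)\ne r(v|\Pi)$ for all distinct $u,v$; $\beta_p(G)$ is the minimum size of a locating partition. *)

theory Defs
  imports Main
begin

definition simple_graph :: "'a set \<Rightarrow> ('a \<Rightarrow> 'a \<Rightarrow> bool) \<Rightarrow> bool" where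
  "simple_graph V E \<longleftrightarrow> finite V \<and> V \<noteq> {} \<and>
     (\<forall>u v. E u v \<longrightarrow> u \<in> V \<and> v \<in> V) \<and>
     (\<forall>u v. E u v \<longrightarrow> E v u) \<and> (\<forall>u. \<not> E u u)"

definition walk :: "('a \<Rightarrow> 'a \<Rightarrow> bool) \<Rightarrow> 'a list \<Rightarrow> bool" where
  "walk E xs \<longleftrightarrow> xs \<noteq> [] \<and> (\<forall>i. Suc i < length xs \<longrightarrow> E (xs ! i) (xs ! Suc i))"

definition connected_graph :: "'a set \<Rightarrow> ('a \<Rightarrow> 'a \<Rightarrow> bool) \<Rightarrow> bool" where
  "connected_graph V E \<longleftrightarrow> (\<forall>u\<in>V. \<forall>v\<in>V. \<exists>xs. walk E xs \<and> hd xs = u \<and> last xs = v)"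

definition gdist :: "('a \<Rightarrow> 'a \<Rightarrow> bool) \<Rightarrow> 'a \<Rightarrow> 'a \<Rightarrow> nat" where
  "gdist E u v = (LEAST k. \<exists>xs. walk E xs \<and> hd xs = u \<and> last xs = v \<and> length xs = Suc k)"

definition diam :: "'a set \<Rightarrow> ('a \<Rightarrow> 'a \<Rightarrow> bool) \<Rightarrow> nat" where
  "diam V E = Max {gdist E u v | u v. u \<in> V \<and> v \<in> V}"

definition nbhd :: "'a set \<Rightarrow> ('a \<Rightarrow> 'a \<Rightarrow> bool) \<Rightarrow> 'a \<Rightarrow> 'a set" where
  "nbhd V E u = {w \<in> V. E u w}"

definition twins :: "'a set \<Rightarrow> ('a \<Rightarrow> 'a \<Rightarrow> bool) \<Rightarrow> 'a \<Rightarrow> 'a \<Rightarrow> bool" where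
  "twins V E u v \<longleftrightarrow> nbhd V E u - {v} = nbhd V E v - {u}"

definition twin_number :: "'a set \<Rightarrow> ('a \<Rightarrow> 'a \<Rightarrow> bool) \<Rightarrow> nat" where
  "twin_number V E = Max {card {v \<in> V. twins V E u v} | u. u \<in> V}"

definition set_dist :: "('a \<Rightarrow> 'a \<Rightarrow> bool) \<Rightarrow> 'a \<Rightarrow> 'a set \<Rightarrow> nat" where
  "set_dist E u S = Min (gdist E u ` S)"

definition is_partition :: "'a set \<Rightarrow> 'a set set \<Rightarrow> bool" where
  "is_partition V P \<longleftrightarrow> \<Union>P = V \<and> {} \<notin> P \<and>
     (\<forall>S\<in>P. \<forall>T\<in>P. S \<noteq> T \<longrightarrow> S \<inter> T = {})"

text \<open>A partition is locating if the distance vectors r(u|P) are pairwise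
distinct, i.e. for distinct u, v some class S has d(u,S) \<noteq> d(v,S).\<close>

definition locating_partition :: "'a set \<Rightarrow> ('a \<Rightarrow> 'a \<Rightarrow> bool) \<Rightarrow> 'a set set \<Rightarrow> bool" where
  "locating_partition V E P \<longleftrightarrow> is_partition V P \<and>
     (\<forall>u\<in>V. \<forall>v\<in>V. u \<noteq> v \<longrightarrow> (\<exists>S\<in>P. set_dist E u S \<noteq> set_dist E v S))"

definition partition_dimension :: "'a set \<Rightarrow> ('a \<Rightarrow> 'a \<Rightarrow> bool) \<Rightarrow> nat" where
  "partition_dimension V E = (LEAST k. \<exists>P. locating_partition V E P \<and> card P = k)"

end

theory Submission
  imports Defs
begin



lemma walk_single[simp]: "walk E [x]"
  by (simp add: walk_def)

lemma walk_Cons2[simp]: "walk E (x # y # xs) \<longleftrightarrow> E x y \<and> walk E (y # xs)"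
proof
  assume h: "walk E (x # y # xs)"
  have "E x y" using h unfolding walk_def by (metis Suc_less_eq length_Cons nth_Cons_0 nth_Cons_Suc zero_less_Suc)
  moreover have "walk E (y # xs)" unfolding walk_def
  proof (intro conjI allI impI)
    fix i assume "Suc i < length (y # xs)"
    then have "Suc (Suc i) < length (x # y # xs)" by simp
    with h have "E ((x#y#xs) ! Suc i) ((x#y#xs) ! Suc (Suc i))" unfolding walk_def by blast
    then show "E ((y # xs) ! i) ((y # xs) ! Suc i)" by simp
  qed simp
  ultimately show "E x y \<and> walk E (y # xs)" by blast
next
  assume h: "E x y \<and> walk E (y # xs)"
  show "walk E (x # y # xs)" unfolding walk_def
  proof (intro conjI allI impI)
    fix i assume i: "Suc i < length (x # y # xs)"
    show "E ((x # y # xs) ! i) ((x # y # xs) ! Suc i)"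
    proof (cases i)
      case 0 then show ?thesis using h by simp
    next
      case (Suc j)
      then have "Suc j < length (y # xs)" using i by simp
      then have "E ((y # xs) ! j) ((y # xs) ! Suc j)" using h unfolding walk_def by blast
      then show ?thesis using Suc by simp
    qed
  qed simp
qed

lemma gdist_le:
  assumes "walk E xs" "hd xs = u" "last xs = v" "length xs = Suc k"
  shows "gdist E u v \<le> k"
  unfolding gdist_def by (rule Least_le) (use assms in blast)

lemma gdist_walk:
  assumes "connected_graph V E" "u \<in> V" "v \<in> V"
  shows "\<exists>xs. walk E xs \<and> hd xs = u \<and> last xs = v \<and> length xs = Suc (gdist E u v)"
proof -
  obtain xs where xs: "walk E xs" "hd xs = u" "last xs = v"
    using assms unfolding connected_graph_def by blast
  then have "xs \<noteq> []" by (simp add: walk_def)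
  then have "length xs = Suc (length xs - 1)" by simp
  with xs have "\<exists>k xs. walk E xs \<and> hd xs = u \<and> last xs = v \<and> length xs = Suc k" by blast
  then show ?thesis unfolding gdist_def by (rule LeastI_ex)
qed

lemma gdist_refl[simp]: "gdist E u u = 0"
proof -
  have "gdist E u u \<le> 0" by (rule gdist_le[of E "[u]"]) auto
  then show ?thesis by simp
qed

lemma gdist_0_iff:
  assumes "connected_graph V E" "u \<in> V" "v \<in> V"
  shows "gdist E u v = 0 \<longleftrightarrow> u = v"
proof
  assume h: "gdist E u v = 0"
  obtain xs where xs: "walk E xs" "hd xs = u" "last xs = v" "length xs = Suc (gdist E u v)"
    using gdist_walk[OF assms] by blast
  then obtain x where "xs = [x]" using h by (auto simp: length_Suc_conv)
  then show "u = v" using xs by simp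
qed simp

lemma gdist_1_iff:
  assumes "simple_graph V E" "connected_graph V E" "u \<in> V" "v \<in> V"
  shows "gdist E u v = 1 \<longleftrightarrow> E u v"
proof
  assume h: "gdist E u v = 1"
  obtain xs where xs: "walk E xs" "hd xs = u" "last xs = v" "length xs = Suc (gdist E u v)"
    using gdist_walk[OF assms(2-4)] by blast
  then obtain x y where "xs = [x,y]" using h by (auto simp: length_Suc_conv numeral_2_eq_2)
  then show "E u v" using xs by simp
next
  assume h: "E u v"
  then have "u \<noteq> v" using assms(1) unfolding simple_graph_def by blast
  then have "gdist E u v \<noteq> 0" using gdist_0_iff[OF assms(2-4)] by simp
  moreover have "gdist E u v \<le> 1" by (rule gdist_le[of E "[u,v]"]) (use h in auto)
  ultimately show "gdist E u v = 1" by simp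
qed

lemma diam2_cases:
  assumes "simple_graph V E" "connected_graph V E" "diam V E = 2" "u \<in> V" "v \<in> V"
  shows "u = v \<or> E u v \<or> (\<exists>m. E u m \<and> E m v)"
proof -
  have fin: "finite V" using assms(1) unfolding simple_graph_def by blast
  have eq: "{gdist E u v | u v. u \<in> V \<and> v \<in> V} = (\<lambda>(u,v). gdist E u v) ` (V \<times> V)" by auto
  have "finite {gdist E u v | u v. u \<in> V \<and> v \<in> V}" unfolding eq using fin by simp
  moreover have "gdist E u v \<in> {gdist E u v | u v. u \<in> V \<and> v \<in> V}" using assms by blast
  ultimately have "gdist E u v \<le> Max {gdist E u v | u v. u \<in> V \<and> v \<in> V}" by (rule Max_ge)
  then have "gdist E u v \<le> 2" using assms(3) unfolding diam_def by simp
  obtain xs where xs: "walk E xs" "hd xs = u" "last xs = v" "length xs = Suc (gdist E u v)"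
    using gdist_walk[OF assms(2,4,5)] by blast
  have "length xs \<le> 3" using xs(4) \<open>gdist E u v \<le> 2\<close> by simp
  then have "(\<exists>a. xs = [a]) \<or> (\<exists>a b. xs = [a,b]) \<or> (\<exists>a b c. xs = [a,b,c])"
    using xs(4)
    apply (cases xs; simp)
    subgoal for a ys by (cases ys; simp; rename_tac b zs; case_tac zs; simp; rename_tac c ws; case_tac ws; simp)
    done
  then show ?thesis using xs by auto
qed




lemma set_dist_single[simp]: "set_dist E u {w} = gdist E u w"
  by (simp add: set_dist_def)

lemma set_dist_in: assumes "finite S" "u \<in> S" shows "set_dist E u S = 0"
proof -
  have "Min (gdist E u ` S) \<le> gdist E u u" using assms by (intro Min_le) (auto intro: rev_image_eqI)
  then show ?thesis by (simp add: set_dist_def)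
qed

lemma set_dist_notin:
  assumes "connected_graph V E" "S \<subseteq> V" "S \<noteq> {}" "finite S" "v \<in> V" "v \<notin> S"
  shows "set_dist E v S \<noteq> 0"
proof -
  have "Min (gdist E v ` S) \<in> gdist E v ` S" using assms by (intro Min_in) auto
  then obtain s where s: "s \<in> S" "set_dist E v S = gdist E v s" by (auto simp: set_dist_def)
  have "v \<noteq> s" using s assms by blast
  then show ?thesis using s gdist_0_iff[OF assms(1) \<open>v \<in> V\<close>, of s] assms(2) by auto
qed

lemma loc_in:
  assumes "connected_graph V E" "finite V" "S \<subseteq> V" "u \<in> S" "v \<in> V" "v \<notin> S" "S \<in> P"
  shows "\<exists>S\<in>P. set_dist E u S \<noteq> set_dist E v S"
proof -
  have "finite S" using finite_subset[OF assms(3,2)] .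
  then have "set_dist E u S = 0" using set_dist_in[OF _ assms(4)] by blast
  moreover have "set_dist E v S \<noteq> 0" using set_dist_notin[OF assms(1,3) _ \<open>finite S\<close> assms(5,6)] assms(4) by blast
  ultimately show ?thesis using assms(7) by (intro bexI[of _ S]) auto
qed

lemma sep_gdist:
  assumes "simple_graph V E" "connected_graph V E" "u \<in> V" "v \<in> V" "w \<in> V" "E w u \<noteq> E w v"
  shows "gdist E u w \<noteq> gdist E v w"
proof -
  have sym: "\<And>x y. E x y = E y x" using assms(1) unfolding simple_graph_def by blast
  show ?thesis using gdist_1_iff[OF assms(1,2,3,5)] gdist_1_iff[OF assms(1,2,4,5)] assms(6) sym
    by metis
qed

lemma loc_pair:
  assumes "simple_graph V E" "connected_graph V E" "{p,q} \<in> P" "{w} \<in> P" "E w p \<noteq> E w q"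
    "u \<in> {p,q}" "v \<in> V" "u \<noteq> v" "w \<in> V" "p \<in> V" "q \<in> V"
  shows "\<exists>S\<in>P. set_dist E u S \<noteq> set_dist E v S"
proof (cases "v \<in> {p,q}")
  case True
  then have "E w u \<noteq> E w v" using assms(5,6,8) by auto
  then have "gdist E u w \<noteq> gdist E v w" using sep_gdist[OF assms(1,2) _ assms(7,9)] assms(6,10,11) by blast
  then show ?thesis using assms(4) by (metis set_dist_single)
next
  case False
  have "finite V" using assms(1) unfolding simple_graph_def by blast
  show ?thesis by (rule loc_in[OF assms(2) \<open>finite V\<close> _ assms(6,7) False assms(3)]) (use assms in auto)
qed

lemma construct:
  assumes sg: "simple_graph V E" and conn: "connected_graph V E" and n: "card V \<ge> 6"
    and d: "distinct [a1,b1,a2,b2,a3,b3]" and sub: "{a1,b1,a2,b2,a3,b3} \<subseteq> V"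
    and w1: "w1 \<in> V - {a1,b1,a2,b2,a3,b3}" and w2: "w2 \<in> V - {a1,b1,a2,b2,a3,b3}"
    and w3: "w3 \<in> V - {a1,b1,a2,b2,a3,b3}"
    and e1: "E w1 a1 \<noteq> E w1 b1" and e2: "E w2 a2 \<noteq> E w2 b2" and e3: "E w3 a3 \<noteq> E w3 b3"
  shows "partition_dimension V E \<le> card V - 3"
proof -
  let ?U = "{a1,b1,a2,b2,a3,b3}"
  define Q where "Q = {{a1,b1},{a2,b2},{a3,b3}}"
  define P where "P = Q \<union> (\<lambda>x. {x}) ` (V - ?U)"
  have finV: "finite V" using sg unfolding simple_graph_def by blast
  have neq: "a1 \<noteq> b1" "a1 \<noteq> a2" "a1 \<noteq> b2" "a1 \<noteq> a3" "a1 \<noteq> b3"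
    "b1 \<noteq> a2" "b1 \<noteq> b2" "b1 \<noteq> a3" "b1 \<noteq> b3" "a2 \<noteq> b2" "a2 \<noteq> a3" "a2 \<noteq> b3"
    "b2 \<noteq> a3" "b2 \<noteq> b3" "a3 \<noteq> b3" using d by auto
  have finU: "finite ?U" by simp
  have cU: "card ?U = 6" using d by simp
  have cQ: "card Q = 3" unfolding Q_def using neq by (simp add: doubleton_eq_iff)
  have cS0: "card ((\<lambda>x. {x}) ` (V - ?U)) = card (V - ?U)"
    by (rule card_image) (simp add: inj_on_def)
  have cS: "card ((\<lambda>x. {x}) ` (V - ?U)) = card V - 6"
    using cS0 card_Diff_subset[OF finU sub] cU by simp
  have disj: "Q \<inter> (\<lambda>x. {x}) ` (V - ?U) = {}"
  proof -
    have "\<And>x. {x} \<notin> Q" unfolding Q_def using neq by (auto simp: doubleton_eq_iff)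
    then show ?thesis by blast
  qed
  have finQ: "finite Q" unfolding Q_def by simp
  have finS: "finite ((\<lambda>x. {x}) ` (V - ?U))" using finV by simp
  have cP: "card P = card V - 3" unfolding P_def
    using card_Un_disjoint[OF finQ finS disj] cQ cS n by simp
  have shape: "\<And>S. S \<in> P \<Longrightarrow> S = {a1,b1} \<or> S = {a2,b2} \<or> S = {a3,b3} \<or> (\<exists>x. S = {x} \<and> x \<in> V - ?U)"
  proof -
    fix S assume "S \<in> P"
    then have "S \<in> Q \<or> S \<in> (\<lambda>x. {x}) ` (V - ?U)" unfolding P_def by simp
    then show "S = {a1,b1} \<or> S = {a2,b2} \<or> S = {a3,b3} \<or> (\<exists>x. S = {x} \<and> x \<in> V - ?U)"
    proof
      assume "S \<in> Q" then show ?thesis unfolding Q_def by blast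
    next
      assume "S \<in> (\<lambda>x. {x}) ` (V - ?U)"
      then obtain x where "S = {x}" "x \<in> V - ?U" by (rule imageE) simp
      then show ?thesis by blast
    qed
  qed
  have un: "\<Union>P = V"
  proof
    show "\<Union>P \<subseteq> V"
    proof
      fix x assume "x \<in> \<Union>P"
      then obtain S where S: "S \<in> P" "x \<in> S" by blast
      from shape[OF S(1)] show "x \<in> V"
      proof (elim disjE exE conjE)
        assume "S = {a1,b1}" then show ?thesis using S(2) sub by auto
      next
        assume "S = {a2,b2}" then show ?thesis using S(2) sub by auto
      next
        assume "S = {a3,b3}" then show ?thesis using S(2) sub by auto
      next
        fix y assume "S = {y}" "y \<in> V - ?U" then show ?thesis using S(2) by auto
      qed
    qed
    show "V \<subseteq> \<Union>P"
    proof
      fix x assume x: "x \<in> V"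
      have q: "{a1,b1} \<in> P" "{a2,b2} \<in> P" "{a3,b3} \<in> P" unfolding P_def Q_def by auto
      show "x \<in> \<Union>P"
      proof (cases "x \<in> ?U")
        case True
        then have "x \<in> {a1,b1} \<or> x \<in> {a2,b2} \<or> x \<in> {a3,b3}" by blast
        then show ?thesis using q by blast
      next
        case False
        then have "{x} \<in> P" unfolding P_def using x by blast
        then show ?thesis by blast
      qed
    qed
  qed
  have q: "{a1,b1} \<in> P" "{a2,b2} \<in> P" "{a3,b3} \<in> P" unfolding P_def Q_def by auto
  have ne: "{} \<notin> P" using shape by blast
  have dj: "\<forall>S\<in>P. \<forall>T\<in>P. S \<noteq> T \<longrightarrow> S \<inter> T = {}"
  proof (intro ballI impI)
    fix S T assume S: "S \<in> P" and T: "T \<in> P" and ST: "S \<noteq> T"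
    define cls where "cls x = (if x \<in> {a1,b1} then {a1,b1} else if x \<in> {a2,b2} then {a2,b2}
        else if x \<in> {a3,b3} then {a3,b3} else {x})" for x
    have c: "R = cls x" if "R \<in> P" "x \<in> R" for R x
    proof -
      from shape[OF that(1)] show ?thesis
      proof (elim disjE exE conjE)
        assume "R = {a1,b1}" then show ?thesis using that(2) neq unfolding cls_def by auto
      next
        assume "R = {a2,b2}" then show ?thesis using that(2) neq unfolding cls_def by auto
      next
        assume "R = {a3,b3}" then show ?thesis using that(2) neq unfolding cls_def by auto
      next
        fix y assume "R = {y}" "y \<in> V - ?U" then show ?thesis using that(2) unfolding cls_def by auto
      qed
    qed
    show "S \<inter> T = {}"
    proof (rule ccontr)
      assume "S \<inter> T \<noteq> {}"
      then obtain x where x: "x \<in> S" "x \<in> T" by blast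
      have "S = cls x" by (rule c[OF S x(1)])
      moreover have "T = cls x" by (rule c[OF T x(2)])
      ultimately have "S = T" by simp
      then show False using ST by blast
    qed
  qed
  have part: "is_partition V P" unfolding is_partition_def using un ne dj by blast
  have inP: "\<And>x. x \<in> V - ?U \<Longrightarrow> {x} \<in> P" unfolding P_def by blast
  have loc: "\<forall>u\<in>V. \<forall>v\<in>V. u \<noteq> v \<longrightarrow> (\<exists>S\<in>P. set_dist E u S \<noteq> set_dist E v S)"
  proof (intro ballI impI)
    fix u v assume u: "u \<in> V" and v: "v \<in> V" and uv: "u \<noteq> v"
    consider "u \<in> {a1,b1}" | "u \<in> {a2,b2}" | "u \<in> {a3,b3}" | "u \<in> V - ?U" using u by blast
    then show "\<exists>S\<in>P. set_dist E u S \<noteq> set_dist E v S"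
    proof cases
      case 1 show ?thesis
        by (rule loc_pair[OF sg conn q(1) inP[OF w1] e1 1 v uv]) (use w1 sub in auto)
    next
      case 2 show ?thesis
        by (rule loc_pair[OF sg conn q(2) inP[OF w2] e2 2 v uv]) (use w2 sub in auto)
    next
      case 3 show ?thesis
        by (rule loc_pair[OF sg conn q(3) inP[OF w3] e3 3 v uv]) (use w3 sub in auto)
    next
      case 4 show ?thesis
        by (rule loc_in[OF conn finV _ _ v _ inP[OF 4]]) (use 4 uv in auto)
    qed
  qed
  have "locating_partition V E P" unfolding locating_partition_def using part loc by blast
  then have "partition_dimension V E \<le> card P"
    unfolding partition_dimension_def by (intro Least_le) blast
  then show ?thesis using cP by simp
qed




definition TWc :: "('a \<Rightarrow> 'a \<Rightarrow> bool) \<Rightarrow> 'a \<Rightarrow> 'a \<Rightarrow> 'a \<Rightarrow> 'a \<Rightarrow> 'a \<Rightarrow> bool" where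
  "TWc R w1 w2 d1 d2 d3 \<longleftrightarrow> w1 \<noteq> w2 \<and> distinct [d1,d2,d3] \<and> d1 \<notin> {w1,w2} \<and> d2 \<notin> {w1,w2} \<and> d3 \<notin> {w1,w2}
     \<and> (R w1 d1 \<or> R w2 d1) \<and> (R w1 d2 \<or> R w2 d2) \<and> (R w1 d3 \<or> R w2 d3)"

lemma outside:
  assumes "finite A" "finite B" "card B < card A" shows "\<exists>x\<in>A. x \<notin> B"
proof (rule ccontr)
  assume "\<not> ?thesis" then have "A \<subseteq> B" by blast
  then have "card A \<le> card B" using card_mono[OF assms(2)] by blast
  then show False using assms(3) by simp
qed

lemma card3_le: "card {a,b,c} \<le> 3"
  using card_length[of "[a,b,c]"] by simp
lemma card4_le: "card {a,b,c,d} \<le> 4"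
  using card_length[of "[a,b,c,d]"] by simp

locale E1ctx =
  fixes V :: "'a set" and R :: "'a \<Rightarrow> 'a \<Rightarrow> bool" and hi :: "'a \<Rightarrow> bool"
  assumes finV: "finite V"
    and Rin: "\<And>x y. R x y \<Longrightarrow> x \<in> V \<and> y \<in> V \<and> x \<noteq> y"
    and out2: "\<And>x a b c. R x a \<Longrightarrow> R x b \<Longrightarrow> R x c \<Longrightarrow> a = b \<or> a = c \<or> b = c"
    and typ_same: "\<And>x y. x \<in> V \<Longrightarrow> y \<in> V \<Longrightarrow> x \<noteq> y \<Longrightarrow> hi x = hi y \<Longrightarrow> R x y \<Longrightarrow> R y x"
    and typ_diff: "\<And>x y. x \<in> V \<Longrightarrow> y \<in> V \<Longrightarrow> x \<noteq> y \<Longrightarrow> hi x \<noteq> hi y \<Longrightarrow> R x y \<longleftrightarrow> \<not> R y x"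
    and Y5: "card {y. \<exists>x. R x y} \<ge> 5"
begin

lemma finY: "finite {y. \<exists>x. R x y}"
  by (rule finite_subset[OF _ finV]) (use Rin in blast)

lemma getY3: "\<exists>y. (\<exists>x. R x y) \<and> y \<notin> {p,q,r}"
  using outside[OF finY _ , of "{p,q,r}"] card3_le[of p q r] Y5 by force

lemma getY4: "\<exists>y. (\<exists>x. R x y) \<and> y \<notin> {p,q,r,s}"
  using outside[OF finY _ , of "{p,q,r,s}"] card4_le[of p q r s] Y5 by force

lemma core:
  assumes va: "R v a" and vb: "R v b" and ab: "a \<noteq> b"
    and outv: "\<And>y. R v y \<Longrightarrow> y = a \<or> y = b"
    and H1: "\<And>x y. R x y \<Longrightarrow> y \<notin> {a,b,v} \<Longrightarrow> x = a \<or> x = b"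
    and ac: "R a c" and c: "c \<notin> {a,b,v}"
  shows "\<exists>w1 w2 d1 d2 d3. TWc R w1 w2 d1 d2 d3"
proof -
  obtain c' x' where c': "c' \<notin> {a,b,v,c}" "R x' c'" using getY4[of a b v c] by blast
  have "x' = a \<or> x' = b" using H1[OF c'(2)] c'(1) by blast
  show ?thesis
  proof (cases "x' = a")
    case True
    have "TWc R v a b c c'" unfolding TWc_def using ab Rin[OF va] Rin[OF vb] True c' c ac va vb ab Rin[OF va] Rin[OF vb] Rin[OF ac] Rin[OF c'(2)] by auto
    then show ?thesis by blast
  next
    case False
    then have bc': "R b c'" using \<open>x' = a \<or> x' = b\<close> c'(2) by blast
    show ?thesis
    proof (cases "R a v \<or> R b v")
      case True
      have "TWc R a b c c' v" unfolding TWc_def using ab Rin[OF va] Rin[OF vb] True c' c ac bc' va vb ab Rin[OF va] Rin[OF vb] Rin[OF ac] Rin[OF bc'] by auto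
      then show ?thesis by blast
    next
      case False
      then have nav: "\<not> R a v" and nbv: "\<not> R b v" by auto
      obtain y x'' where y: "y \<notin> {a,b,c,c'}" "R x'' y" using getY4[of a b c c'] by blast
      show ?thesis
      proof (cases "y = v")
        case False
        then have "x'' = a \<or> x'' = b" using H1[OF y(2)] y(1) by blast
        then show ?thesis
        proof
          assume "x'' = a"
          then have "TWc R v a b c y" unfolding TWc_def using ab Rin[OF va] Rin[OF vb] y False c' c ac va vb Rin[OF va] Rin[OF vb] Rin[OF ac] Rin[OF y(2)] by auto
          then show ?thesis by blast
        next
          assume "x'' = b"
          then have "TWc R v b a c' y" unfolding TWc_def using ab Rin[OF va] Rin[OF vb] y False c' c bc' va vb Rin[OF va] Rin[OF vb] Rin[OF bc'] Rin[OF y(2)] by auto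
          then show ?thesis by blast
        qed
      next
        case True
        define x where "x = x''"
        have xv: "R x v" using y(2) True x_def by simp
        have xab: "x \<noteq> a" "x \<noteq> b" using xv nav nbv by auto
        have xnv: "x \<noteq> v" using Rin[OF xv] by blast
        have nvx: "\<not> R v x" using outv xab by blast
        have inV: "a \<in> V" "b \<in> V" "v \<in> V" "c \<in> V" "c' \<in> V" "x \<in> V"
          using Rin[OF va] Rin[OF vb] Rin[OF ac] Rin[OF bc'] Rin[OF xv] by auto
        have hva: "hi v \<noteq> hi a"
          using typ_same[OF inV(3) inV(1) _ _ va] nav Rin[OF va] by blast
        have hvb: "hi v \<noteq> hi b"
          using typ_same[OF inV(3) inV(2) _ _ vb] nbv Rin[OF vb] by blast
        have hxv: "hi x \<noteq> hi v"
          using typ_same[OF inV(6) inV(3) xnv _ xv] nvx by blast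
        have cab: "c \<noteq> a" "c \<noteq> b" "c \<noteq> v" "c' \<noteq> a" "c' \<noteq> b" "c' \<noteq> v" "c \<noteq> c'"
          using c c' by auto
        have nvc: "\<not> R v c" "\<not> R v c'" using outv cab by blast+
        show ?thesis
        proof (cases "hi c = hi a")
          case True
          have ca: "R c a" using typ_same[OF inV(1) inV(4) cab(1)[symmetric] True[symmetric] ac] .
          have cv: "R c v" using typ_diff[OF inV(4) inV(3) cab(3)] True hva nvc(1) by auto
          have "TWc R c b a v c'" unfolding TWc_def using ab Rin[OF va] Rin[OF vb] ca cv bc' cab ab Rin[OF va] by auto
          then show ?thesis by blast
        next
          case False
          note hca = False
          show ?thesis
          proof (cases "hi c' = hi b")
            case True
            have cb: "R c' b" using typ_same[OF inV(2) inV(5) cab(5)[symmetric] True[symmetric] bc'] .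
            have cv: "R c' v" using typ_diff[OF inV(5) inV(3) cab(6)] True hvb nvc(2) by auto
            have "TWc R c' a b v c" unfolding TWc_def using ab Rin[OF va] Rin[OF vb] cb cv ac cab ab Rin[OF vb] by auto
            then show ?thesis by blast
          next
            case False
            have hxc: "hi x \<noteq> hi c" using hca hva hxv by (cases "hi x"; cases "hi c"; cases "hi a"; cases "hi v"; simp)
            have hxc': "hi x \<noteq> hi c'" using False hvb hxv hva by (cases "hi x"; cases "hi c'"; cases "hi b"; cases "hi v"; cases "hi a"; simp)
            have xc: "x \<noteq> c" "x \<noteq> c'" using hxc hxc' by auto
            show ?thesis
            proof (cases "R x c")
              case True
              have "TWc R x b v c c'" unfolding TWc_def using ab Rin[OF va] Rin[OF vb] True xv bc' xc xab xnv cab Rin[OF vb] by auto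
              then show ?thesis by blast
            next
              case False
              note nxc = False
              show ?thesis
              proof (cases "R x c'")
                case True
                have "TWc R x a v c' c" unfolding TWc_def using ab Rin[OF va] Rin[OF vb] True xv ac xc xab xnv cab Rin[OF va] by auto
                then show ?thesis by blast
              next
                case False
                have cx: "R c x" using typ_diff[OF inV(6) inV(4) xc(1) hxc] nxc by blast
                have "TWc R v c a b x" unfolding TWc_def using ab Rin[OF va] Rin[OF vb] cx va vb xab xnv xc cab ab Rin[OF va] Rin[OF vb] by auto
                then show ?thesis by blast
              qed
            qed
          qed
        qed
      qed
    qed
  qed
qed

lemma E1:
  assumes va: "R v a" and vb: "R v b" and ab: "a \<noteq> b"
  shows "\<exists>w1 w2 d1 d2 d3. TWc R w1 w2 d1 d2 d3"
proof -
  have outv: "\<And>y. R v y \<Longrightarrow> y = a \<or> y = b" using out2[OF va vb] ab by blast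
  show ?thesis
  proof (cases "\<exists>x y. R x y \<and> y \<notin> {a,b,v} \<and> x \<noteq> a \<and> x \<noteq> b")
    case True
    then obtain x y where xy: "R x y" "y \<notin> {a,b,v}" "x \<noteq> a" "x \<noteq> b" by blast
    have "x \<noteq> v" using outv xy by blast
    then have "TWc R v x a b y" unfolding TWc_def using ab Rin[OF va] Rin[OF vb] xy va vb ab Rin[OF va] Rin[OF vb] Rin[OF xy(1)] by auto
    then show ?thesis by blast
  next
    case False
    then have H1: "\<And>x y. R x y \<Longrightarrow> y \<notin> {a,b,v} \<Longrightarrow> x = a \<or> x = b" by blast
    obtain c x where c: "c \<notin> {a,b,v}" "R x c" using getY3[of a b v] by blast
    have "x = a \<or> x = b" using H1[OF c(2) c(1)] .
    then show ?thesis
    proof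
      assume "x = a"
      then show ?thesis by (intro core[of v a b c]) (use va vb ab outv H1 c in auto)
    next
      assume "x = b"
      have H1': "\<And>x y. R x y \<Longrightarrow> y \<notin> {b,a,v} \<Longrightarrow> x = b \<or> x = a" using H1 by blast
      have outv': "\<And>y. R v y \<Longrightarrow> y = b \<or> y = a" using outv by blast
      show ?thesis by (intro core[of v b a c]) (use va vb ab outv' H1' c \<open>x = b\<close> in auto)
    qed
  qed
qed

end



definition hi :: "'a set \<Rightarrow> ('a \<Rightarrow> 'a \<Rightarrow> bool) \<Rightarrow> 'a \<Rightarrow> bool" where
  "hi V E w \<longleftrightarrow> \<not> card (nbhd V E w) \<le> 2"

definition Rl :: "'a set \<Rightarrow> ('a \<Rightarrow> 'a \<Rightarrow> bool) \<Rightarrow> 'a \<Rightarrow> 'a \<Rightarrow> bool" where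
  "Rl V E x y \<longleftrightarrow> x \<in> V \<and> y \<in> V \<and> x \<noteq> y \<and> (E x y \<noteq> hi V E x)"

lemma three_elems:
  assumes "finite A" "card A \<ge> 3"
  obtains a b c where "a \<in> A" "b \<in> A" "c \<in> A" "distinct [a,b,c]"
proof -
  obtain B where B: "B \<subseteq> A" "card B = 3" using obtain_subset_with_card_n[OF assms(2)] by blast
  then obtain a b c where "B = {a,b,c}" "a \<noteq> b" "b \<noteq> c" "a \<noteq> c" using card_3_iff by metis
  then show ?thesis using that B by auto
qed

lemma from_W:
  assumes sg: "simple_graph V E" and conn: "connected_graph V E" and n: "card V \<ge> 9"
    and finW: "finite W"
    and cW: "card (W \<union> {y. \<exists>w\<in>W. Rl V E w y}) \<le> 6"
    and d: "distinct [d1,d2,d3]" and dW: "d1 \<notin> W" "d2 \<notin> W" "d3 \<notin> W"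
    and dR: "\<exists>w\<in>W. Rl V E w d1" "\<exists>w\<in>W. Rl V E w d2" "\<exists>w\<in>W. Rl V E w d3"
  shows "partition_dimension V E \<le> card V - 3"
proof -
  let ?A = "W \<union> {y. \<exists>w\<in>W. Rl V E w y}"
  have finV: "finite V" using sg unfolding simple_graph_def by blast
  have finA: "finite ?A"
  proof -
    have "{y. \<exists>w\<in>W. Rl V E w y} \<subseteq> V" unfolding Rl_def by blast
    then show ?thesis using finW finite_subset[OF _ finV] by blast
  qed
  have "card V - card ?A \<le> card (V - ?A)" by (rule diff_card_le_card_Diff[OF finA])
  then have "card (V - ?A) \<ge> 3" using cW n by linarith
  then obtain r1 r2 r3 where r: "r1 \<in> V - ?A" "r2 \<in> V - ?A" "r3 \<in> V - ?A" "distinct [r1,r2,r3]"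
    using three_elems[of "V - ?A"] finV by blast
  obtain w1 where w1: "w1 \<in> W" "Rl V E w1 d1" using dR(1) by blast
  obtain w2 where w2: "w2 \<in> W" "Rl V E w2 d2" using dR(2) by blast
  obtain w3 where w3: "w3 \<in> W" "Rl V E w3 d3" using dR(3) by blast
  have dA: "d1 \<in> ?A" "d2 \<in> ?A" "d3 \<in> ?A" using w1 w2 w3 by blast+
  have dV: "d1 \<in> V" "d2 \<in> V" "d3 \<in> V" "w1 \<in> V" "w2 \<in> V" "w3 \<in> V"
    using w1 w2 w3 unfolding Rl_def by blast+
  have nR: "\<not> Rl V E w r" if "w \<in> W" "r \<in> V - ?A" for w r using that by blast
  have sepE: "E w d \<noteq> E w r" if "w \<in> W" "Rl V E w d" "r \<in> V - ?A" for w d r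
  proof -
    have "w \<noteq> r" using that(1,3) by blast
    moreover have "w \<in> V" using that(2) unfolding Rl_def by blast
    ultimately have "E w r = hi V E w" using nR[OF that(1,3)] that(3) unfolding Rl_def by blast
    moreover have "E w d \<noteq> hi V E w" using that(2) unfolding Rl_def by blast
    ultimately show ?thesis by blast
  qed
  show ?thesis
  proof (rule construct[OF sg conn _ _ _ _ _ _ sepE[OF w1 r(1)] sepE[OF w2 r(2)] sepE[OF w3 r(3)]])
    show "6 \<le> card V" using n by simp
    show "distinct [d1, r1, d2, r2, d3, r3]" using d r dA by auto
    show "{d1, r1, d2, r2, d3, r3} \<subseteq> V" using dV r by auto
    show "w1 \<in> V - {d1, r1, d2, r2, d3, r3}" using w1(1) dW r dV by auto
    show "w2 \<in> V - {d1, r1, d2, r2, d3, r3}" using w2(1) dW r dV by auto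
    show "w3 \<in> V - {d1, r1, d2, r2, d3, r3}" using w3(1) dW r dV by auto
  qed
qed

lemma TW_bound:
  assumes sg: "simple_graph V E" and conn: "connected_graph V E" and n: "card V \<ge> 9"
    and c2: "\<And>w. card {y. Rl V E w y} \<le> 2"
    and tw: "TWc (Rl V E) w1 w2 d1 d2 d3"
  shows "partition_dimension V E \<le> card V - 3"
proof -
  have finV: "finite V" using sg unfolding simple_graph_def by blast
  have fin: "finite {y. Rl V E w y}" for w
    by (rule finite_subset[OF _ finV]) (auto simp: Rl_def)
  have eq: "{w1,w2} \<union> {y. \<exists>w\<in>{w1,w2}. Rl V E w y} = {w1,w2} \<union> {y. Rl V E w1 y} \<union> {y. Rl V E w2 y}" by auto
  have "card ({w1,w2} \<union> {y. Rl V E w1 y} \<union> {y. Rl V E w2 y}) \<le> card ({w1,w2} \<union> {y. Rl V E w1 y}) + card {y. Rl V E w2 y}"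
    by (rule card_Un_le)
  also have "\<dots> \<le> card {w1,w2} + card {y. Rl V E w1 y} + card {y. Rl V E w2 y}"
    using card_Un_le[of "{w1,w2}" "{y. Rl V E w1 y}"] by simp
  also have "\<dots> \<le> 6" using c2[of w1] c2[of w2] card_length[of "[w1,w2]"] by simp
  finally have cW: "card ({w1,w2} \<union> {y. \<exists>w\<in>{w1,w2}. Rl V E w y}) \<le> 6" unfolding eq .
  show ?thesis
    by (rule from_W[OF sg conn n _ cW, of d1 d2 d3]) (use tw in \<open>auto simp: TWc_def\<close>)
qed




lemma sg_facts:
  assumes "simple_graph V E"
  shows "finite V" "\<And>x y. E x y \<Longrightarrow> x \<in> V \<and> y \<in> V" "\<And>x y. E x y \<Longrightarrow> E y x" "\<And>x. \<not> E x x"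
  using assms unfolding simple_graph_def by blast+

lemma tw_ge:
  assumes "finite V" "u \<in> V"
  shows "card {v \<in> V. twins V E u v} \<le> twin_number V E"
proof -
  have eq: "{card {v \<in> V. twins V E u v} | u. u \<in> V} = (\<lambda>u. card {v \<in> V. twins V E u v}) ` V" by auto
  have "finite {card {v \<in> V. twins V E u v} | u. u \<in> V}" unfolding eq using assms(1) by simp
  moreover have "card {v \<in> V. twins V E u v} \<in> {card {v \<in> V. twins V E u v} | u. u \<in> V}" using assms(2) by blast
  ultimately show ?thesis unfolding twin_number_def by (rule Max_ge)
qed

lemma twin_contra:
  assumes fin: "finite V" and n: "card V \<ge> 9" and twb: "2 * twin_number V E \<le> card V"
    and S: "S \<subseteq> V" "card V \<le> card S + 2" and s0: "s0 \<in> V" and tw: "\<And>s. s \<in> S \<Longrightarrow> twins V E s0 s"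
  shows False
proof -
  have "S \<subseteq> {v \<in> V. twins V E s0 v}" using S tw by blast
  then have "card S \<le> card {v \<in> V. twins V E s0 v}" by (rule card_mono[rotated]) (use fin in simp)
  also have "\<dots> \<le> twin_number V E" by (rule tw_ge[OF fin s0])
  finally show False using S(2) twb n by linarith
qed

lemma Y5:
  assumes sg: "simple_graph V E" and n: "card V \<ge> 9" and twb: "2 * twin_number V E \<le> card V"
  shows "card {y. \<exists>x. Rl V E x y} \<ge> 5"
proof -
  note f = sg_facts[OF sg]
  let ?Y = "{y. \<exists>x. Rl V E x y}"
  have YV: "?Y \<subseteq> V" unfolding Rl_def by blast
  show ?thesis
  proof (cases "V - ?Y = {}")
    case True
    then have "?Y = V" using YV by blast
    then show ?thesis using n by simp
  next
    case False
    then obtain u0 where u0: "u0 \<in> V" "u0 \<notin> ?Y" by blast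
    have tw: "twins V E u0 v" if v: "v \<in> V - ?Y" for v
    proof -
      have "y \<in> nbhd V E u0 - {v} \<longleftrightarrow> y \<in> nbhd V E v - {u0}" for y
      proof (cases "y \<in> V \<and> y \<noteq> u0 \<and> y \<noteq> v")
        case True
        have "\<not> Rl V E y u0" "\<not> Rl V E y v" using u0 v by blast+
        then have "E y u0 = hi V E y" "E y v = hi V E y" using True u0 v unfolding Rl_def by blast+
        then have "E u0 y = E v y" using f(3) by metis
        then show ?thesis using True unfolding nbhd_def by blast
      next
        case False
        then show ?thesis unfolding nbhd_def using f(4) by blast
      qed
      then show ?thesis unfolding twins_def by blast
    qed
    have "card V \<le> card ?Y + card (V - ?Y)"
      using card_Un_le[of ?Y "V - ?Y"] YV by (simp add: Un_absorb1)
    moreover have "card (V - ?Y) \<le> twin_number V E"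
    proof -
      have "V - ?Y \<subseteq> {v \<in> V. twins V E u0 v}" using tw by blast
      then have "card (V - ?Y) \<le> card {v \<in> V. twins V E u0 v}" by (rule card_mono[rotated]) (use f(1) in simp)
      also have "\<dots> \<le> twin_number V E" by (rule tw_ge[OF f(1) u0(1)])
      finally show ?thesis .
    qed
    ultimately show ?thesis using twb n by linarith
  qed
qed

lemma nb_exists:
  assumes sg: "simple_graph V E" and conn: "connected_graph V E" and dm: "diam V E = 2"
    and n: "card V \<ge> 2" and u: "u \<in> V"
  shows "\<exists>z. E u z"
proof -
  note f = sg_facts[OF sg]
  obtain t where t: "t \<in> V" "t \<notin> {u}" using outside[OF f(1), of "{u}"] n by force
  show ?thesis using diam2_cases[OF sg conn dm u t(1)] t(2) by blast
qed




lemma E2: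
  assumes sg: "simple_graph V E" and conn: "connected_graph V E" and n: "card V \<ge> 9"
    and twb: "2 * twin_number V E \<le> card V" and dm: "diam V E = 2"
    and uniq: "\<And>v a b. Rl V E v a \<Longrightarrow> Rl V E v b \<Longrightarrow> a = b"
  shows "partition_dimension V E \<le> card V - 3"
proof -
  note f = sg_facts[OF sg]
  have lowR: "Rl V E u y \<longleftrightarrow> E u y" if "u \<in> V" "\<not> hi V E u" for u y
    using that f(2,4) unfolding Rl_def by blast
  have highR: "Rl V E u y \<longleftrightarrow> (y \<in> V \<and> u \<noteq> y \<and> \<not> E u y)" if "u \<in> V" "hi V E u" for u y
    using that unfolding Rl_def by blast
  have uq: "y = y'" if "s \<in> V" "\<not> hi V E s" "E s y" "E s y'" for s y y'
    using uniq lowR that by blast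
  have nb: "\<exists>z. E u z" if "u \<in> V" for u using nb_exists[OF sg conn dm _ that] n by simp
  show ?thesis
  proof (cases "\<exists>u\<in>V. \<not> hi V E u")
    case False
    then have allhi: "\<And>u. u \<in> V \<Longrightarrow> hi V E u" by blast
    have symR: "Rl V E y x" if "Rl V E x y" for x y
    proof -
      have "x \<in> V" "y \<in> V" using that unfolding Rl_def by blast+
      then show ?thesis using that highR[OF _ allhi] f(3) by metis
    qed
    let ?Y = "{y. \<exists>x. Rl V E x y}"
    have finY: "finite ?Y" by (rule finite_subset[OF _ f(1)]) (auto simp: Rl_def)
    have cY: "card ?Y \<ge> 5" by (rule Y5[OF sg n twb])
    obtain y1 where y1: "y1 \<in> ?Y" using cY by fastforce
    then obtain p1 where p1: "Rl V E p1 y1" by blast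
    obtain y2 where y2: "y2 \<in> ?Y" "y2 \<notin> {y1,p1}"
      using outside[OF finY _, of "{y1,p1}"] card_length[of "[y1,p1]"] cY by force
    then obtain p2 where p2: "Rl V E p2 y2" by blast
    obtain y3 where y3: "y3 \<in> ?Y" "y3 \<notin> {y1,p1,y2,p2}"
      using outside[OF finY _, of "{y1,p1,y2,p2}"] card_length[of "[y1,p1,y2,p2]"] cY by force
    then obtain p3 where p3: "Rl V E p3 y3" by blast
    have irr: "p1 \<noteq> y1" "p2 \<noteq> y2" "p3 \<noteq> y3" using p1 p2 p3 unfolding Rl_def by blast+
    have s1: "Rl V E y1 p1" "Rl V E y2 p2" "Rl V E y3 p3" using symR p1 p2 p3 by blast+
    have y1p2: "y1 \<noteq> p2" using uniq[OF s1(1)] p2 y2 by blast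
    have y1p3: "y1 \<noteq> p3" using uniq[OF s1(1)] p3 y3 by blast
    have y2p3: "y2 \<noteq> p3" using uniq[OF s1(2)] p3 y3 by blast
    let ?W = "{p1,p2,p3}"
    have sub: "?W \<union> {y. \<exists>w\<in>?W. Rl V E w y} \<subseteq> set [p1,p2,p3,y1,y2,y3]"
      using uniq p1 p2 p3 by auto
    have cW: "card (?W \<union> {y. \<exists>w\<in>?W. Rl V E w y}) \<le> 6"
      using card_mono[OF _ sub] card_length[of "[p1,p2,p3,y1,y2,y3]"] by simp
    show ?thesis
      by (rule from_W[OF sg conn n _ cW, of y1 y2 y3]) (use y2 y3 irr y1p2 y1p3 y2p3 p1 p2 p3 in auto)
  next
    case True
    then obtain u where u: "u \<in> V" "\<not> hi V E u" by blast
    obtain z where z: "E u z" using nb[OF u(1)] by blast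
    have zV: "z \<in> V" using f(2)[OF z] by blast
    have False
    proof (cases "\<exists>u'\<in>V. \<not> hi V E u' \<and> u' \<noteq> u")
      case True
      then obtain u' where u': "u' \<in> V" "\<not> hi V E u'" "u' \<noteq> u" by blast
      obtain z' where z': "E u' z'" using nb[OF u'(1)] by blast
      have lowS: "\<not> hi V E h" if h: "h \<in> V" "h \<noteq> z" "h \<noteq> z'" for h
      proof
        assume hh: "hi V E h"
        have "h \<noteq> u" "h \<noteq> u'" using hh u u' by blast+
        have "\<not> E h u" using uq[OF u z] h(2) f(3) by blast
        then have "Rl V E h u" using highR[OF h(1) hh] u(1) \<open>h \<noteq> u\<close> by blast
        moreover have "\<not> E h u'" using uq[OF u'(1,2) z'] h(3) f(3) by blast
        then have "Rl V E h u'" using highR[OF h(1) hh] u'(1) \<open>h \<noteq> u'\<close> by blast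
        ultimately show False using uniq u'(3) by blast
      qed
      let ?S = "V - {z,z'}"
      have cS: "card V \<le> card ?S + 2"
        using diff_card_le_card_Diff[of "{z,z'}" V] card_length[of "[z,z']"] by simp
      obtain s0 where s0: "s0 \<in> V" "s0 \<notin> {z,z'}"
        using outside[OF f(1), of "{z,z'}"] card_length[of "[z,z']"] n by force
      obtain t0 where t0: "E s0 t0" using nb[OF s0(1)] by blast
      have s0low: "\<not> hi V E s0" using lowS s0 by blast
      have allS: "E s t0" if s: "s \<in> ?S" for s
      proof (cases "s = s0")
        case True then show ?thesis using t0 by simp
      next
        case False
        have slow: "\<not> hi V E s" using lowS s by blast
        have sV: "s \<in> V" using s by blast
        from diam2_cases[OF sg conn dm s0(1) sV] False
        consider "E s0 s" | m where "E s0 m" "E m s" by blast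
        then show ?thesis
        proof cases
          case 1
          have st: "s = t0" using uq[OF s0(1) s0low 1 t0] .
          from diam2_cases[OF sg conn dm s0(1) zV] s0(2)
          consider "E s0 z" | m where "E s0 m" "E m z" by blast
          then show ?thesis
          proof cases
            case 1
            then have "z = t0" using uq[OF s0(1) s0low _ t0] by blast
            then show ?thesis using st s by blast
          next
            case 2
            then have "m = s" using uq[OF s0(1) s0low _ t0] st by blast
            then have "E s z" "E s s0" using 2 \<open>E s0 s\<close> f(3) by blast+
            then have "z = s0" using uq[OF sV slow] by blast
            then show ?thesis using s0 by blast
          qed
        next
          case 2
          then have "m = t0" using uq[OF s0(1) s0low _ t0] by blast
          then show ?thesis using 2 f(3) by blast
        qed
      qed
      have nbS: "nbhd V E s = {t0}" if s: "s \<in> ?S" for s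
      proof -
        have "E s t0" by (rule allS[OF s])
        moreover have "s \<in> V" "\<not> hi V E s" using s lowS by blast+
        ultimately show ?thesis unfolding nbhd_def using uq f(2) by blast
      qed
      have "twins V E s0 s" if s: "s \<in> ?S" for s
      proof -
        have s0S: "s0 \<in> ?S" using s0 by blast
        have "t0 \<noteq> s" "t0 \<noteq> s0" using allS[OF s] t0 f(4) by blast+
        then show ?thesis unfolding twins_def using nbS[OF s] nbS[OF s0S] by auto
      qed
      then show False using twin_contra[OF f(1) n twb _ cS s0(1)] by blast
    next
      case False
      then have onlyu: "\<And>u'. u' \<in> V \<Longrightarrow> \<not> hi V E u' \<Longrightarrow> u' = u" by blast
      let ?S = "V - {u,z}"
      have nbh: "nbhd V E h = V - {h,u}" if h: "h \<in> ?S" for h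
      proof -
        have hV: "h \<in> V" using h by blast
        have hh: "hi V E h" using onlyu h by blast
        have "\<not> E h u" using uq[OF u z] h f(3) by blast
        then have hu: "Rl V E h u" using highR[OF hV hh] u(1) h by blast
        have "E h y" if "y \<in> V" "y \<noteq> h" "y \<noteq> u" for y
        proof (rule ccontr)
          assume "\<not> E h y"
          then have "Rl V E h y" using highR[OF hV hh] that by blast
          then show False using uniq[OF _ hu] that by blast
        qed
        then show ?thesis unfolding nbhd_def using \<open>\<not> E h u\<close> f(4) by blast
      qed
      have cS: "card V \<le> card ?S + 2"
        using diff_card_le_card_Diff[of "{u,z}" V] card_length[of "[u,z]"] by simp
      obtain s0 where s0: "s0 \<in> V" "s0 \<notin> {u,z}"
        using outside[OF f(1), of "{u,z}"] card_length[of "[u,z]"] n by force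
      have "twins V E s0 s" if s: "s \<in> ?S" for s
      proof -
        have s0S: "s0 \<in> ?S" using s0 by blast
        show ?thesis unfolding twins_def using nbh[OF s] nbh[OF s0S] by blast
      qed
      then show False using twin_contra[OF f(1) n twb _ cS s0(1)] by blast
    qed
    then show ?thesis by blast
  qed
qed




theorem proposition13:
  fixes V :: "'a set" and E :: "'a \<Rightarrow> 'a \<Rightarrow> bool"
  assumes "simple_graph V E"
    and "connected_graph V E"
    and "card V \<ge> 9"
    and "2 * twin_number V E \<le> card V"
    and "diam V E = 2"
  shows "partition_dimension V E \<le> card V - 3"
proof -
  note sg = assms(1) and conn = assms(2) and n = assms(3) and twb = assms(4) and dm = assms(5)
  note f = sg_facts[OF sg]
  show ?thesis
  proof (cases "\<exists>w\<in>V. 3 \<le> card (nbhd V E w) \<and> 3 \<le> card (V - nbhd V E w - {w})")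
    case True
    then obtain w where w: "w \<in> V" "3 \<le> card (nbhd V E w)" "3 \<le> card (V - nbhd V E w - {w})" by blast
    have finN: "finite (nbhd V E w)" unfolding nbhd_def using f(1) by simp
    have finM: "finite (V - nbhd V E w - {w})" using f(1) by simp
    obtain a1 a2 a3 where a: "a1 \<in> nbhd V E w" "a2 \<in> nbhd V E w" "a3 \<in> nbhd V E w" "distinct [a1,a2,a3]"
      using three_elems[OF finN w(2)] by blast
    obtain b1 b2 b3 where b: "b1 \<in> V - nbhd V E w - {w}" "b2 \<in> V - nbhd V E w - {w}"
      "b3 \<in> V - nbhd V E w - {w}" "distinct [b1,b2,b3]"
      using three_elems[OF finM w(3)] by blast
    have Ea: "E w a1" "E w a2" "E w a3" "a1 \<in> V" "a2 \<in> V" "a3 \<in> V" using a unfolding nbhd_def by blast+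
    have Eb: "\<not> E w b1" "\<not> E w b2" "\<not> E w b3" using b unfolding nbhd_def by blast+
    have wa: "w \<noteq> a1" "w \<noteq> a2" "w \<noteq> a3" using Ea f(4) by blast+
    show ?thesis
    proof (rule construct[OF sg conn _ _ _ _ _ _, of a1 b1 a2 b2 a3 b3 w w w])
      show "6 \<le> card V" using n by simp
      show "distinct [a1, b1, a2, b2, a3, b3]" using a b by auto
      show "{a1, b1, a2, b2, a3, b3} \<subseteq> V" using Ea b by auto
      show "w \<in> V - {a1, b1, a2, b2, a3, b3}" using w(1) wa b by auto
      show "w \<in> V - {a1, b1, a2, b2, a3, b3}" using w(1) wa b by auto
      show "w \<in> V - {a1, b1, a2, b2, a3, b3}" using w(1) wa b by auto
      show "E w a1 \<noteq> E w b1" "E w a2 \<noteq> E w b2" "E w a3 \<noteq> E w b3" using Ea Eb by auto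
    qed
  next
    case False
    note C2 = False
    have c2: "card {y. Rl V E w y} \<le> 2" for w
    proof (cases "w \<in> V")
      case False
      then have "{y. Rl V E w y} = {}" unfolding Rl_def by blast
      then show ?thesis by simp
    next
      case True
      show ?thesis
      proof (cases "hi V E w")
        case False
        then have "{y. Rl V E w y} = nbhd V E w" unfolding Rl_def nbhd_def using True f(4) by auto
        then show ?thesis using False unfolding hi_def by simp
      next
        case hw: True
        then have "{y. Rl V E w y} = V - nbhd V E w - {w}" unfolding Rl_def nbhd_def using True by auto
        moreover have "3 \<le> card (nbhd V E w)" using hw unfolding hi_def by simp
        ultimately show ?thesis using C2 True by auto
      qed
    qed
    have finR: "finite {y. Rl V E w y}" for w
      by (rule finite_subset[OF _ f(1)]) (auto simp: Rl_def)
    interpret E1ctx V "Rl V E" "hi V E"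
    proof
      show "finite V" by (rule f(1))
      show "\<And>x y. Rl V E x y \<Longrightarrow> x \<in> V \<and> y \<in> V \<and> x \<noteq> y" unfolding Rl_def by blast
      show "a = b \<or> a = c \<or> b = c" if "Rl V E x a" "Rl V E x b" "Rl V E x c" for x a b c
      proof (rule ccontr)
        assume "\<not> (a = b \<or> a = c \<or> b = c)"
        then have "card {a,b,c} = 3" by simp
        moreover have "card {a,b,c} \<le> card {y. Rl V E x y}"
          by (rule card_mono[OF finR]) (use that in blast)
        ultimately show False using c2[of x] by simp
      qed
      show "Rl V E y x" if "x \<in> V" "y \<in> V" "x \<noteq> y" "hi V E x = hi V E y" "Rl V E x y" for x y
        using that f(3) unfolding Rl_def by metis
      show "Rl V E x y \<longleftrightarrow> \<not> Rl V E y x" if "x \<in> V" "y \<in> V" "x \<noteq> y" "hi V E x \<noteq> hi V E y" for x y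
      proof -
        have "E x y = E y x" using f(3) by blast
        then show ?thesis using that unfolding Rl_def by auto
      qed
      show "5 \<le> card {y. \<exists>x. Rl V E x y}" by (rule Y5[OF sg n twb])
    qed
    show ?thesis
    proof (cases "\<exists>v a b. Rl V E v a \<and> Rl V E v b \<and> a \<noteq> b")
      case True
      then obtain v a b where "Rl V E v a" "Rl V E v b" "a \<noteq> b" by blast
      then obtain w1 w2 d1 d2 d3 where "TWc (Rl V E) w1 w2 d1 d2 d3" using E1 by blast
      then show ?thesis using TW_bound[OF sg conn n c2] by blast
    next
      case False
      then have "\<And>v a b. Rl V E v a \<Longrightarrow> Rl V E v b \<Longrightarrow> a = b" by blast
      then show ?thesis by (rule E2[OF sg conn n twb dm])
    qed
  qed
qed


end
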